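(* Let $n\ge1$ be an integer. Suppose there exists $p>1$ such that for every $s>\frac{n}{2(n+1)}$ there is $C_s$ with $$\Big\|\sup_{0<t<1}|e^{it\Delta}f(x)|\Big\|_{L^p(B(0,1))}\le C_s\|f\|_{H^s(\mathbb{R}^n)}\quad\text{for all }f\in H^s(\mathbb{R}^n).$$ Then $p\le\frac{2(n+1)}{n}$.
   Context: For $f$ on $\mathbb{R}^n$, $e^{it\Delta}f(x):=\int_{\mathbb{R}^n}e^{i(x\cdot\xi+t|\xi|^2)}\hat f(\xi)\,d\xi$; $H^s(\mathbb{R}^n)$ is the $L^2$-based Sobolev space; $B(0,1)$ is the unit ball in $\mathbb{R}^n$. *)

theory Defs
  imports "HOL-Analysis.Analysis"
begin

text \<open>Functions on R^n are represented via their Fourier transform g = f-hat.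
  The Schroedinger evolution is e^{it Delta} f (x) = integral of
  e^{i(x.xi + t|xi|^2)} g(xi) d xi.\<close>

definition schrod :: "(real ^ 'n \<Rightarrow> complex) \<Rightarrow> real \<Rightarrow> real ^ 'n \<Rightarrow> complex" where
  "schrod g t x = integral\<^sup>L lborel (\<lambda>\<xi>. cis (x \<bullet> \<xi> + t * (norm \<xi>)\<^sup>2) * g \<xi>)"

definition schrod_max :: "(real ^ 'n \<Rightarrow> complex) \<Rightarrow> real ^ 'n \<Rightarrow> ennreal" where
  "schrod_max g x = (SUP t\<in>{0<..<1}. ennreal (cmod (schrod g t x)))"

definition ennpowr :: "ennreal \<Rightarrow> real \<Rightarrow> ennreal" where
  "ennpowr a p = (if a = top then top else ennreal (enn2real a powr p))"

definition Lp_norm_on :: "real \<Rightarrow> 'a::euclidean_space set \<Rightarrow> ('a \<Rightarrow> ennreal) \<Rightarrow> ennreal" where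
  "Lp_norm_on p S F =
     (let I = (\<integral>\<^sup>+ x \<in> S. ennpowr (F x) p \<partial>lborel) in
      ennpowr I (1 / p))"

definition in_Hs :: "real \<Rightarrow> (real ^ 'n \<Rightarrow> complex) \<Rightarrow> bool" where
  "in_Hs s g \<longleftrightarrow> g \<in> borel_measurable lborel \<and>
     integrable lborel (\<lambda>\<xi>. (1 + (norm \<xi>)\<^sup>2) powr s * (cmod (g \<xi>))\<^sup>2)"

definition Hs_norm :: "real \<Rightarrow> (real ^ 'n \<Rightarrow> complex) \<Rightarrow> real" where
  "Hs_norm s g = sqrt (integral\<^sup>L lborel (\<lambda>\<xi>. (1 + (norm \<xi>)\<^sup>2) powr s * (cmod (g \<xi>))\<^sup>2))"

end

theory Submission
  imports Defs
begin
lemma meas_cball: "R \<ge> 0 \<Longrightarrow> measure lborel (cball (0::real^'n) R) = unit_ball_vol (CARD('n)) * R ^ CARD('n)"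
  using content_cball[of R "0::real^'n"] by simp
lemma meas_ball: "R \<ge> 0 \<Longrightarrow> emeasure lborel (ball (0::real^'n) R) = ennreal (unit_ball_vol (CARD('n)) * R ^ CARD('n))"
  using emeasure_ball[of R "0::real^'n"] by simp

lemma cos_ge: "\<bar>y::real\<bar> \<le> 1 \<Longrightarrow> cos 1 \<le> cos y"
proof -
  assume "\<bar>y\<bar> \<le> 1"
  hence "cos 1 \<le> cos \<bar>y\<bar>" using pi_gt3 cos_monotone_0_pi_le[of "\<bar>y\<bar>" 1] by auto
  thus ?thesis by simp
qed

lemma schrod_lower:
  fixes x :: "real^'n"
  assumes R: "R \<ge> 1" and x: "norm x \<le> 1/(2*R)" and t: "0 \<le> t" "t \<le> 1/(2*R^2)"
  shows "cos 1 * (unit_ball_vol (CARD('n)) * R ^ CARD('n)) \<le> cmod (schrod (indicator (cball 0 R)) t x)"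
proof -
  let ?S = "cball (0::real^'n) R"
  have eq: "(\<lambda>\<xi>. cis (x \<bullet> \<xi> + t * (norm \<xi>)\<^sup>2) * indicator ?S \<xi>) = (\<lambda>\<xi>. indicator ?S \<xi> *\<^sub>R cis (x \<bullet> \<xi> + t * (norm \<xi>)\<^sup>2))"
    by (auto simp: indicator_def)
  have int: "integrable lborel (\<lambda>\<xi>. indicator ?S \<xi> *\<^sub>R cis (x \<bullet> \<xi> + t * (norm \<xi>)\<^sup>2))"
    by (intro borel_integrable_compact compact_cball continuous_intros)
  have "Re (schrod (indicator ?S) t x) = integral\<^sup>L lborel (\<lambda>\<xi>. Re (indicator ?S \<xi> *\<^sub>R cis (x \<bullet> \<xi> + t * (norm \<xi>)\<^sup>2)))"
    unfolding schrod_def eq by (rule integral_Re[symmetric, OF int])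
  also have "\<dots> = integral\<^sup>L lborel (\<lambda>\<xi>. indicator ?S \<xi> * cos (x \<bullet> \<xi> + t * (norm \<xi>)\<^sup>2))"
    by (simp add: cis.sel)
  also have "\<dots> \<ge> integral\<^sup>L lborel (\<lambda>\<xi>. indicator ?S \<xi> * cos 1)"
  proof (rule integral_mono)
    show "integrable lborel (\<lambda>\<xi>. indicator ?S \<xi> * cos (1::real))"
      using borel_integrable_compact[of ?S "\<lambda>_. cos (1::real)"] by (simp add: mult.commute)
    show "integrable lborel (\<lambda>\<xi>. indicator ?S \<xi> * cos (x \<bullet> \<xi> + t * (norm \<xi>)\<^sup>2))"
      using borel_integrable_compact[of ?S "\<lambda>\<xi>. cos (x \<bullet> \<xi> + t * (norm \<xi>)\<^sup>2)"]
      by (simp add: continuous_intros)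
    fix \<xi> :: "real^'n"
    show "indicator ?S \<xi> * cos 1 \<le> indicator ?S \<xi> * cos (x \<bullet> \<xi> + t * (norm \<xi>)\<^sup>2)"
    proof (cases "\<xi> \<in> ?S")
      case True
      hence nx: "norm \<xi> \<le> R" by simp
      have "\<bar>x \<bullet> \<xi>\<bar> \<le> norm x * norm \<xi>" by (rule Cauchy_Schwarz_ineq2)
      also have "\<dots> \<le> 1/(2*R) * R" using nx x R by (intro mult_mono) auto
      also have "\<dots> = 1/2" using R by simp
      finally have a: "\<bar>x \<bullet> \<xi>\<bar> \<le> 1/2" .
      have "t * (norm \<xi>)\<^sup>2 \<le> 1/(2*R^2) * R^2" using nx t R by (intro mult_mono power_mono) auto
      also have "\<dots> = 1/2" using R by simp
      finally have b: "t * (norm \<xi>)\<^sup>2 \<le> 1/2" .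
      have "0 \<le> t * (norm \<xi>)\<^sup>2" using t by simp
      with a b have "\<bar>x \<bullet> \<xi> + t * (norm \<xi>)\<^sup>2\<bar> \<le> 1" by linarith
      thus ?thesis using True cos_ge by simp
    qed simp
  qed
  also have "integral\<^sup>L lborel (\<lambda>\<xi>. indicator ?S \<xi> * cos (1::real)) = cos 1 * measure lborel ?S"
    by simp
  finally have "cos 1 * (unit_ball_vol (CARD('n)) * R ^ CARD('n)) \<le> Re (schrod (indicator ?S) t x)"
    using meas_cball[where 'n='n, of R] R by simp
  thus ?thesis using complex_Re_le_cmod order_trans by blast
qed

lemma max_lower:
  fixes x :: "real^'n"
  assumes R: "R \<ge> 1" and x: "norm x \<le> 1/(2*R)"
  shows "ennreal (cos 1 * (unit_ball_vol (CARD('n)) * R ^ CARD('n))) \<le> schrod_max (indicator (cball 0 R)) x"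
proof -
  have "1 \<le> R^2" using R by (simp add: one_le_power)
  hence t: "1/(2*R^2) \<in> {0<..<(1::real)}" by (auto simp: divide_less_eq)
  have "cos 1 * (unit_ball_vol (CARD('n)) * R ^ CARD('n)) \<le> cmod (schrod (indicator (cball 0 R)) (1/(2*R^2)) x)"
    using schrod_lower[OF R x] by simp
  hence "ennreal (cos 1 * (unit_ball_vol (CARD('n)) * R ^ CARD('n))) \<le> ennreal (cmod (schrod (indicator (cball 0 R)) (1/(2*R^2)) x))"
    by (rule ennreal_leI)
  also have "\<dots> \<le> schrod_max (indicator (cball 0 R)) x"
    unfolding schrod_max_def using t by (rule SUP_upper)
  finally show ?thesis .
qed

lemma ennpowr_lb:
  assumes "0 \<le> a" "ennreal a \<le> F" "p > 0"
  shows "ennreal (a powr p) \<le> ennpowr F p"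
proof (cases "F = top")
  case True thus ?thesis by (simp add: ennpowr_def)
next
  case False
  then obtain b where b: "F = ennreal b" "0 \<le> b" using ennreal_cases[of F] by auto
  hence "a \<le> b" using assms by simp
  hence "a powr p \<le> b powr p" using assms by (intro powr_mono2) auto
  thus ?thesis using b False by (simp add: ennpowr_def)
qed

lemma Lp_lower:
  assumes R: "R \<ge> 1" and p: "p > 0"
  shows "ennreal ((cos 1 * (unit_ball_vol (CARD('n)) * R ^ CARD('n))) *
            (unit_ball_vol (CARD('n)) * (1/(2*R)) ^ CARD('n)) powr (1/p))
         \<le> Lp_norm_on p (ball 0 1) (schrod_max (indicator (cball (0::real^'n) R)))"
proof -
  define a where "a = cos 1 * (unit_ball_vol (CARD('n)) * R ^ CARD('n))"
  define m where "m = unit_ball_vol (CARD('n)) * (1/(2*R)) ^ CARD('n)"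
  have c1: "cos (1::real) > 0" using pi_gt3 cos_gt_zero[of "1::real"] by simp
  have a: "a > 0" unfolding a_def using c1 R by simp
  have m: "m > 0" unfolding m_def using R by simp
  let ?F = "schrod_max (indicator (cball (0::real^'n) R))"
  let ?I = "\<integral>\<^sup>+ x \<in> ball (0::real^'n) 1. ennpowr (?F x) p \<partial>lborel"
  have "ennreal (a powr p * m) = ennreal (a powr p) * emeasure lborel (ball (0::real^'n) (1/(2*R)))"
    using emeasure_ball[of "1/(2*R)" "0::real^'n"] R unfolding m_def
    by (simp add: ennreal_mult)
  also have "\<dots> = (\<integral>\<^sup>+ x. ennreal (a powr p) * indicator (ball (0::real^'n) (1/(2*R))) x \<partial>lborel)"
    by (rule nn_integral_cmult_indicator[symmetric]) simp
  also have "\<dots> \<le> ?I"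
  proof (rule nn_integral_mono)
    fix x :: "real^'n"
    show "ennreal (a powr p) * indicator (ball 0 (1/(2*R))) x \<le> ennpowr (?F x) p * indicator (ball 0 1) x"
    proof (cases "x \<in> ball 0 (1/(2*R))")
      case True
      hence nx: "norm x \<le> 1/(2*R)" by simp
      have "1/(2*R) \<le> 1" using R by simp
      hence "x \<in> ball 0 1" using True by simp
      moreover have "ennreal (a powr p) \<le> ennpowr (?F x) p"
        using ennpowr_lb[OF _ max_lower[OF R nx] p] a unfolding a_def by simp
      ultimately show ?thesis using True by simp
    qed simp
  qed
  finally have I: "ennreal (a powr p * m) \<le> ?I" .
  have "ennreal ((a powr p * m) powr (1/p)) \<le> ennpowr ?I (1/p)"
    using ennpowr_lb[OF _ I] a m p by simp
  also have "(a powr p * m) powr (1/p) = a * m powr (1/p)"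
    using a m p by (simp add: powr_mult powr_powr)
  finally show ?thesis unfolding Lp_norm_on_def a_def m_def Let_def .
qed

lemma Hs_facts:
  assumes R: "R \<ge> 1" and s: "s \<ge> 0"
  shows "in_Hs s (indicator (cball (0::real^'n) R) :: real^'n \<Rightarrow> complex)"
    and "integrable lborel (indicator (cball (0::real^'n) R) :: real^'n \<Rightarrow> complex)"
    and "Hs_norm s (indicator (cball (0::real^'n) R) :: real^'n \<Rightarrow> complex)
           \<le> sqrt ((1 + R^2) powr s * (unit_ball_vol (CARD('n)) * R ^ CARD('n)))"
proof -
  let ?S = "cball (0::real^'n) R"
  have eq: "(\<lambda>\<xi>. (1 + (norm \<xi>)\<^sup>2) powr s * (cmod (indicator ?S \<xi> :: complex))\<^sup>2)
      = (\<lambda>\<xi>. indicator ?S \<xi> *\<^sub>R (1 + (norm \<xi>)\<^sup>2) powr s)"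
    by (auto simp: indicator_def)
  have int1: "integrable lborel (\<lambda>\<xi>. indicator ?S \<xi> *\<^sub>R (1 + (norm \<xi>)\<^sup>2) powr s)"
    by (intro borel_integrable_compact compact_cball continuous_intros) (auto, smt (verit) zero_le_power2)
  have int2: "integrable lborel (\<lambda>\<xi>. indicator ?S \<xi> *\<^sub>R (1::complex))"
    by (intro borel_integrable_compact compact_cball continuous_intros)
  have meas: "(indicator ?S :: real^'n \<Rightarrow> complex) \<in> borel_measurable lborel"
    by (intro borel_measurable_indicator) simp
  show "in_Hs s (indicator ?S :: real^'n \<Rightarrow> complex)"
    unfolding in_Hs_def eq using int1 meas by simp
  show "integrable lborel (indicator ?S :: real^'n \<Rightarrow> complex)"
  proof -
    have "(\<lambda>\<xi>. indicator ?S \<xi> *\<^sub>R (1::complex)) = indicator ?S"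
      by (auto simp: indicator_def)
    thus ?thesis using int2 by simp
  qed
  have "integral\<^sup>L lborel (\<lambda>\<xi>. indicator ?S \<xi> *\<^sub>R (1 + (norm \<xi>)\<^sup>2) powr s)
        \<le> integral\<^sup>L lborel (\<lambda>\<xi>. indicator ?S \<xi> *\<^sub>R (1 + R^2) powr s)"
  proof (rule integral_mono[OF int1])
    show "integrable lborel (\<lambda>\<xi>. indicator ?S \<xi> *\<^sub>R (1 + R^2) powr s)"
      by (intro borel_integrable_compact compact_cball continuous_intros)
    fix \<xi> :: "real^'n"
    show "indicator ?S \<xi> *\<^sub>R (1 + (norm \<xi>)\<^sup>2) powr s \<le> indicator ?S \<xi> *\<^sub>R (1 + R^2) powr s"
    proof (cases "\<xi> \<in> ?S")
      case True
      hence "norm \<xi> \<le> R" by simp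
      hence "(norm \<xi>)\<^sup>2 \<le> R^2" by (intro power_mono) auto
      thus ?thesis using True s by (auto intro!: powr_mono2)
    qed simp
  qed
  also have "\<dots> = (1 + R^2) powr s * (unit_ball_vol (CARD('n)) * R ^ CARD('n))"
    using meas_cball[where 'n='n, of R] R by simp
  finally show "Hs_norm s (indicator ?S :: real^'n \<Rightarrow> complex)
           \<le> sqrt ((1 + R^2) powr s * (unit_ball_vol (CARD('n)) * R ^ CARD('n)))"
    unfolding Hs_norm_def eq by simp
qed

lemma lhs_eq:
  fixes R V p :: real and N :: nat
  assumes "R > 0" "V > 0" "p > 0"
  shows "cos 1 * (V * R ^ N) * (V * (1/(2*R)) ^ N) powr (1/p)
     = (cos 1 * V * V powr (1/p) * 2 powr (- (N/p))) * R powr (N - N/p)"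
proof -
  have "(V * (1/(2*R)) ^ N) powr (1/p) = V powr (1/p) * ((1/(2*R)) powr N) powr (1/p)"
    using assms by (simp add: powr_mult powr_realpow)
  also have "((1/(2*R)) powr N) powr (1/p) = (1/(2*R)) powr (N/p)"
    by (simp add: powr_powr)
  also have "\<dots> = 2 powr (- (N/p)) * R powr (- (N/p))"
    using assms by (simp add: powr_divide powr_minus_divide powr_mult)
  finally have a: "(V * (1/(2*R)) ^ N) powr (1/p) = V powr (1/p) * (2 powr (- (N/p)) * R powr (- (N/p)))" .
  have b: "R ^ N = R powr N" using assms by (simp add: powr_realpow)
  have c: "R powr (N - N/p) = R powr N * R powr (- (N/p))"
    using assms by (simp add: powr_add[symmetric])
  show ?thesis unfolding a b c by (simp add: ac_simps)
qed

lemma rhs_le: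
  fixes R V s :: real and N :: nat
  assumes "R \<ge> 1" "V > 0" "s \<ge> 0"
  shows "sqrt ((1 + R^2) powr s * (V * R ^ N)) \<le> sqrt (2 powr s * V) * R powr (s + N/2)"
proof -
  have "1 + R^2 \<le> 2 * R^2" using assms by (simp add: one_le_power)
  hence "(1 + R^2) powr s \<le> (2 * R^2) powr s" using assms by (intro powr_mono2) auto
  also have "(2 * R^2) powr s = 2 powr s * (R^2) powr s"
    using assms by (intro powr_mult)
  also have "R^2 = R powr 2" using assms by (simp add: powr_realpow)
  also have "(R powr 2) powr s = R powr (2 * s)" by (rule powr_powr)
  finally have "(1 + R^2) powr s * (V * R ^ N) \<le> 2 powr s * R powr (2 * s) * (V * R ^ N)"
    using assms by (intro mult_right_mono) auto
  also have "\<dots> = (2 powr s * V) * R powr (2 * s + N)"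
    using assms by (simp add: powr_add powr_realpow)
  finally have "sqrt ((1 + R^2) powr s * (V * R ^ N)) \<le> sqrt ((2 powr s * V) * R powr (2 * s + N))"
    by (rule real_sqrt_le_mono)
  also have "\<dots> = sqrt (2 powr s * V) * (R powr (2 * s + N)) powr (1/2)"
    using assms by (simp add: real_sqrt_mult powr_half_sqrt)
  also have "(R powr (2 * s + N)) powr (1/2) = R powr (s + N/2)"
    by (simp add: powr_powr field_simps)
  finally show ?thesis .
qed

lemma growth_contra:
  fixes K e B :: real
  assumes "K > 0" "e > 0" "\<And>R. R \<ge> 1 \<Longrightarrow> K * R powr e \<le> B"
  shows False
proof -
  define R where "R = max 1 ((\<bar>B\<bar>/K + 1) powr (1/e))"
  have R1: "R \<ge> 1" unfolding R_def by simp
  have "(\<bar>B\<bar>/K + 1) powr (1/e) \<le> R" unfolding R_def by simp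
  hence "((\<bar>B\<bar>/K + 1) powr (1/e)) powr e \<le> R powr e"
    using assms by (intro powr_mono2) auto
  also have "((\<bar>B\<bar>/K + 1) powr (1/e)) powr e = \<bar>B\<bar>/K + 1"
    using assms by (simp add: powr_powr add_pos_nonneg)
  finally have "\<bar>B\<bar>/K + 1 \<le> R powr e" .
  hence "K * (\<bar>B\<bar>/K + 1) \<le> K * R powr e" using assms by simp
  also have "\<dots> \<le> B" using assms R1 by simp
  finally have 1: "K * (\<bar>B\<bar>/K + 1) \<le> B" .
  have "K * (\<bar>B\<bar>/K + 1) = \<bar>B\<bar> + K" using assms by (simp add: field_simps)
  with 1 have "\<bar>B\<bar> + K \<le> B" by simp
  thus False using assms by linarith
qed
lemma delta_eq: "(n::real) > 0 \<Longrightarrow> p > 0 \<Longrightarrow> (n / 2 - n / p - n / (2 * (n + 1))) * (2 * p * (n + 1)) = n * (p * n - 2 * (n + 1))"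
proof -
  assume n: "n > 0" and p: "p > 0"
  have a: "n / 2 * (2 * p * (n + 1)) = n * p * (n + 1)" by simp
  have b: "n / p * (2 * p * (n + 1)) = 2 * n * (n + 1)" using p by simp
  have h: "2 * (n + 1) \<noteq> 0" using n by simp
  have c: "n / (2 * (n + 1)) * (2 * p * (n + 1)) = n * p" 
  proof -
    have "n / (2 * (n + 1)) * (2 * p * (n + 1)) = (n * p) * ((2 * (n + 1)) / (2 * (n + 1)))"
      by (simp add: ac_simps)
    also have "\<dots> = n * p" using h by simp
    finally show ?thesis .
  qed
  show ?thesis unfolding left_diff_distrib a b c by (simp add: algebra_simps)
qed

theorem theorem1p5:
  fixes p :: real
  assumes "p > 1"
    and "\<forall>s::real. s > real CARD('n) / (2 * (real CARD('n) + 1)) \<longrightarrow>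
           (\<exists>C::real. \<forall>g :: real ^ 'n \<Rightarrow> complex.
              in_Hs s g \<and> integrable lborel g \<longrightarrow>
              Lp_norm_on p (ball 0 1) (schrod_max g) \<le> ennreal (C * Hs_norm s g))"
  shows "p \<le> 2 * (real CARD('n) + 1) / real CARD('n)"
proof (rule ccontr)
  assume np: "\<not> p \<le> 2 * (real CARD('n) + 1) / real CARD('n)"
  let ?N = "CARD('n)"
  let ?n = "real CARD('n)"
  let ?V = "unit_ball_vol (real CARD('n))"
  have n0: "?n > 0" by simp
  have p0: "p > 0" using assms(1) by simp
  have V0: "?V > 0" by simp
  have c1: "cos (1::real) > 0" using pi_gt3 cos_gt_zero[of "1::real"] by simp
  define s0 where "s0 = ?n / (2 * (?n + 1))"
  define \<delta> where "\<delta> = ?n / 2 - ?n / p - s0"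
  define s where "s = s0 + \<delta> / 2"
  define e where "e = \<delta> / 2"
  have "2 * (?n + 1) / ?n < p" using np by simp
  hence "2 * (?n + 1) < p * ?n" using pos_divide_less_eq[OF n0] by blast
  hence pos: "p * ?n - 2 * (?n + 1) > 0" by simp
  have deq: "\<delta> * (2 * p * (?n + 1)) = ?n * (p * ?n - 2 * (?n + 1))"
    unfolding \<delta>_def s0_def using n0 p0 by (rule delta_eq)
  have dp: "?n * (p * ?n - 2 * (?n + 1)) > 0" using pos n0 by simp
  have qp: "2 * p * (?n + 1) > 0" using p0 n0 by simp
  have d0: "\<delta> > 0" using deq dp qp zero_less_mult_pos2 by metis
  have s0pos: "s0 > 0" unfolding s0_def using n0 by simp
  have ss0: "s > s0" unfolding s_def using d0 by simp
  have s_nn: "s \<ge> 0" using ss0 s0pos by simp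
  have e0: "e > 0" unfolding e_def using d0 by simp
  have expo: "?n - ?n / p = e + (s + ?n / 2)" unfolding e_def s_def \<delta>_def by simp
  obtain C where C: "\<And>g :: real ^ 'n \<Rightarrow> complex. in_Hs s g \<and> integrable lborel g \<Longrightarrow>
      Lp_norm_on p (ball 0 1) (schrod_max g) \<le> ennreal (C * Hs_norm s g)"
    using assms(2) ss0 unfolding s0_def by blast
  define K1 where "K1 = cos 1 * ?V * ?V powr (1/p) * 2 powr (- (?n/p))"
  define K2 where "K2 = sqrt (2 powr s * ?V)"
  have Vp: "?V powr (1/p) > 0" using V0 by (simp add: less_imp_neq[OF V0, symmetric])
  have K1: "K1 > 0" unfolding K1_def using c1 V0 Vp by (intro mult_pos_pos) auto
  show False
  proof (rule growth_contra[OF K1 e0])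
    fix R :: real
    assume R: "R \<ge> 1"
    let ?g = "indicator (cball (0::real^'n) R) :: real^'n \<Rightarrow> complex"
    define X where "X = (cos 1 * (?V * R ^ ?N)) * (?V * (1/(2*R)) ^ ?N) powr (1/p)"
    have XK: "X = K1 * R powr (?n - ?n/p)"
      unfolding X_def K1_def by (rule lhs_eq) (use R V0 p0 in auto)
    have X0: "X > 0" unfolding XK using K1 R by simp
    have "ennreal X \<le> Lp_norm_on p (ball 0 1) (schrod_max ?g)"
      unfolding X_def by (rule Lp_lower[OF R p0])
    also have "\<dots> \<le> ennreal (C * Hs_norm s ?g)"
      using C Hs_facts(1,2)[OF R s_nn] by blast
    finally have "X \<le> C * Hs_norm s ?g" using X0 by (auto simp: ennreal_le_iff2)
    moreover have H0: "Hs_norm s ?g \<ge> 0" unfolding Hs_norm_def by simp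
    ultimately have C0: "C > 0" using X0
      by (metis less_le_trans mult_nonpos_nonneg not_less)
    have "X \<le> C * Hs_norm s ?g" by fact
    also have "\<dots> \<le> C * sqrt ((1 + R^2) powr s * (?V * R ^ ?N))"
      using Hs_facts(3)[OF R s_nn] C0 by (intro mult_left_mono) auto
    also have "\<dots> \<le> C * (K2 * R powr (s + ?n/2))"
      unfolding K2_def using rhs_le[OF R V0 s_nn, of ?N] C0 by (intro mult_left_mono) auto
    finally have "K1 * R powr e * R powr (s + ?n/2) \<le> (C * K2) * R powr (s + ?n/2)"
      unfolding XK expo by (simp add: powr_add ac_simps)
    thus "K1 * R powr e \<le> C * K2" using R by simp
  qed
qed

end
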